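(* Let $p$ be a prime with $p\equiv 1 \pmod 4$, let $G=\mathbb{Z}_{2p}$ and $H=\{0,p\}\le G$. Define $A_0=\{s,\ s+p\in\mathbb{Z}_{2p}: s\in\{1,\dots,p-1\} \text{ is a quadratic residue modulo } p\}$ and $A_1=\{t,\ t+p\in\mathbb{Z}_{2p}: t\in\{1,\dots,p-1\} \text{ is a quadratic non-residue modulo } p\}$ (so $|A_0|=|A_1|=p-1$ and $\mathbb{Z}_{2p}\setminus(A_0\cup A_1)=H$). Then (i) $\Delta(A_0)=\frac{p-5}{2}A_0\cup\frac{p-1}{2}A_1\cup(p-1)\{p\}$; (ii) $\Delta(A_1)=\frac{p-5}{2}A_1\cup\frac{p-1}{2}A_0\cup(p-1)\{p\}$; (iii) $\{A_0,A_1\}$ is a $(2p,2,p-1,p-3,2p-2)$-DPDF and a $(2p,2,p-1,p-1,0)$-EPDF in $\mathbb{Z}_{2p}$.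
   Context: For $D\subseteq \mathbb{Z}_v$, $\Delta(D)$ is the multiset $\{x-y:x,y\in D,x\ne y\}$, and $\Delta(D_1,D_2)$ is the multiset $\{x-y:x\in D_1,y\in D_2\}$. For a nonnegative integer $\lambda$ and a set $X$, $\lambda X$ denotes the multiset consisting of $\lambda$ copies of each element of $X$, and $\cup$ between multisets denotes multiset union. For a family $A=\{A_1,\dots,A_s\}$ of pairwise disjoint subsets, ${\rm Int}(A)=\bigcup_i\Delta(A_i)$ and ${\rm Ext}(A)=\bigcup_{i\ne j}\Delta(A_i,A_j)$. In a group $G$ of order $v$ with identity $0$, a $(v,s,k,\lambda,\mu)$-DPDF is a family of $s$ pairwise disjoint $k$-subsets of $G\setminus\{0\}$ with union $S$ such that ${\rm Int}(A)$ contains each element of $S$ exactly $\lambda$ times and each element of $G\setminus(S\cup\{0\})$ exactly $\mu$ times; a $(v,s,k,\lambda,\mu)$-EPDF is defined the same way using ${\rm Ext}(A)$. *)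

theory Defs
  imports "HOL-Library.Multiset" "HOL-Number_Theory.Number_Theory"
begin

text \<open>The cyclic group Z_v is represented by the integers 0..v-1 with addition mod v.\<close>

definition zgrp :: "int \<Rightarrow> int set" where
  "zgrp v = {0..<v}"

definition Delta :: "int \<Rightarrow> int set \<Rightarrow> int multiset" where
  "Delta v D = image_mset (\<lambda>(x, y). (x - y) mod v)
      (mset_set {(x, y). x \<in> D \<and> y \<in> D \<and> x \<noteq> y})"

definition Delta2 :: "int \<Rightarrow> int set \<Rightarrow> int set \<Rightarrow> int multiset" where
  "Delta2 v D1 D2 = image_mset (\<lambda>(x, y). (x - y) mod v) (mset_set (D1 \<times> D2))"

definition mcopies :: "nat \<Rightarrow> 'a set \<Rightarrow> 'a multiset" where
  "mcopies l X = repeat_mset l (mset_set X)"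

definition IntD :: "int \<Rightarrow> int set set \<Rightarrow> int multiset" where
  "IntD v F = (\<Sum>A\<in>F. Delta v A)"

definition ExtD :: "int \<Rightarrow> int set set \<Rightarrow> int multiset" where
  "ExtD v F = (\<Sum>(A, B)\<in>{(A, B). A \<in> F \<and> B \<in> F \<and> A \<noteq> B}. Delta2 v A B)"

definition pdf_family :: "int \<Rightarrow> nat \<Rightarrow> nat \<Rightarrow> int set set \<Rightarrow> bool" where
  "pdf_family v s k F \<longleftrightarrow> finite F \<and> card F = s \<and>
     (\<forall>A\<in>F. A \<subseteq> zgrp v - {0} \<and> card A = k) \<and>
     (\<forall>A\<in>F. \<forall>B\<in>F. A \<noteq> B \<longrightarrow> A \<inter> B = {})"

definition is_DPDF :: "int \<Rightarrow> nat \<Rightarrow> nat \<Rightarrow> nat \<Rightarrow> nat \<Rightarrow> int set set \<Rightarrow> bool" where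
  "is_DPDF v s k l m F \<longleftrightarrow> pdf_family v s k F \<and>
     (\<forall>x\<in>\<Union>F. count (IntD v F) x = l) \<and>
     (\<forall>x\<in>zgrp v - (\<Union>F \<union> {0}). count (IntD v F) x = m)"

definition is_EPDF :: "int \<Rightarrow> nat \<Rightarrow> nat \<Rightarrow> nat \<Rightarrow> nat \<Rightarrow> int set set \<Rightarrow> bool" where
  "is_EPDF v s k l m F \<longleftrightarrow> pdf_family v s k F \<and>
     (\<forall>x\<in>\<Union>F. count (ExtD v F) x = l) \<and>
     (\<forall>x\<in>zgrp v - (\<Union>F \<union> {0}). count (ExtD v F) x = m)"

end

theory Submission
  imports Defs
begin


lemma leg_cong_nat:
  assumes "prime p" "p > 2"
  shows "[Legendre a p = a ^ nat ((p - 1) div 2)] (mod p)"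
proof -
  have "[Legendre a (int (nat p)) = a ^ ((nat p - 1) div 2)] (mod int (nat p))"
    by (rule euler_criterion) (use assms in auto)
  moreover have "(nat p - 1) div 2 = nat ((p-1) div 2)" using assms by (simp add: nat_div_distrib nat_diff_distrib)
  ultimately show ?thesis using assms by simp
qed

lemma leg_vals: "Legendre a p \<in> {-1,0,1}"
  by (simp add: Legendre_def)

lemma dvd_small:
  fixes x p :: int
  assumes "p dvd x" "\<bar>x\<bar> < p"
  shows "x = 0"
proof (rule ccontr)
  assume "x \<noteq> 0"
  then have "\<bar>p\<bar> \<le> \<bar>x\<bar>" using dvd_imp_le_int assms(1) by blast
  then show False using assms(2) by linarith
qed

lemma small_cong_eq:
  fixes x y p :: int
  assumes "x \<in> {-1,0,1}" "y \<in> {-1,0,1}" "p > 2" "[x = y] (mod p)"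
  shows "x = y"
proof -
  have "p dvd (x - y)" using assms(4) by (simp add: cong_iff_dvd_diff)
  moreover have "\<bar>x - y\<bar> < p" using assms(1-3) by auto
  ultimately show ?thesis using dvd_small by fastforce
qed

lemma leg_mult:
  assumes "prime p" "p > 2"
  shows "Legendre (a*b) p = Legendre a p * Legendre b p"
proof -
  let ?k = "nat ((p - 1) div 2)"
  have "[Legendre (a*b) p = (a*b)^?k] (mod p)" using leg_cong_nat assms by blast
  moreover have "[Legendre a p * Legendre b p = a^?k * b^?k] (mod p)"
    using leg_cong_nat[OF assms] cong_mult by blast
  ultimately have "[Legendre (a*b) p = Legendre a p * Legendre b p] (mod p)"
    by (metis cong_sym cong_trans power_mult_distrib)
  moreover have "Legendre a p * Legendre b p \<in> {-1,0,1}" using leg_vals[of a p] leg_vals[of b p] by auto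
  ultimately show ?thesis using small_cong_eq leg_vals assms(2) by blast
qed

lemma leg_mod: "Legendre (a mod p) p = Legendre a p"
  by (simp add: Legendre_def QuadRes_def cong_def)

lemma leg_nz:
  assumes "prime p" "a \<in> {1..p-1}"
  shows "Legendre a p = 1 \<or> Legendre a p = -1"
proof -
  have "\<not> [a = 0] (mod p)" using assms by (auto simp: cong_def)
  then show ?thesis by (auto simp: Legendre_def)
qed

lemma leg_neg1:
  assumes "prime p" "[p = 1] (mod 4)"
  shows "Legendre (-1) p = 1"
proof -
  have p2: "p > 2"
  proof -
    have "p \<ge> 2" using assms(1) prime_ge_2_int by blast
    moreover have "p \<noteq> 2" using assms(2) by (auto simp: cong_def)
    ultimately show ?thesis by simp
  qed
  have "[Legendre (-1) p = (-1) ^ nat ((p - 1) div 2)] (mod p)" using leg_cong_nat assms(1) p2 by blast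
  moreover have "even (nat ((p - 1) div 2))"
  proof -
    have "p mod 4 = 1" using assms(2) by (simp add: cong_def)
    then have "p = 4*(p div 4)+1" using div_mult_mod_eq[of p 4] by linarith
    then have "(p - 1) div 2 = 2 * (p div 4)" by linarith
    then show ?thesis by (simp add: nat_mult_distrib)
  qed
  ultimately have "[Legendre (-1) p = 1] (mod p)" by simp
  then show ?thesis using small_cong_eq[of "Legendre (-1) p" 1 p] leg_vals p2 by auto
qed


definition Cls :: "int \<Rightarrow> int \<Rightarrow> int set" where
  "Cls p e = {a \<in> {1..p-1}. Legendre a p = e}"

definition Fc :: "int \<Rightarrow> int set \<Rightarrow> int set \<Rightarrow> int \<Rightarrow> nat" where
  "Fc p X Y r = card {(a,b). a \<in> X \<and> b \<in> Y \<and> (a - b) mod p = r}"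

lemma leg_pm: "\<not> p dvd m \<Longrightarrow> Legendre m p = 1 \<or> Legendre m p = -1"
  by (auto simp: Legendre_def cong_0_iff)

lemma Cls_sub: "Cls p e \<subseteq> {1..p-1}" by (auto simp: Cls_def)
lemma finite_Cls[simp]: "finite (Cls p e)" by (rule finite_subset[OF Cls_sub]) auto

lemma leg_one: "p > 1 \<Longrightarrow> Legendre 1 p = 1"
  by (auto simp: Legendre_def QuadRes_def cong_def intro: exI[of _ 1])

lemma Fc_fin: "finite {(a,b). a \<in> Cls p e1 \<and> b \<in> Cls p e2 \<and> P a b}"
  by (rule finite_subset[of _ "Cls p e1 \<times> Cls p e2"]) auto

context
  fixes p :: int
  assumes pp: "prime p" and p4: "[p = 1] (mod 4)"
begin

lemma p2: "p > 2"
proof -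
  have "p \<ge> 2" using pp prime_ge_2_int by blast
  moreover have "p \<noteq> 2" using p4 by (auto simp: cong_def)
  ultimately show ?thesis by simp
qed

lemma pmod4: "p mod 4 = 1" using p4 by (simp add: cong_def)

lemma mult_inj:
  assumes "\<not> p dvd m" "a \<in> {1..p-1}" "a' \<in> {1..p-1}" "(m*a) mod p = (m*a') mod p"
  shows "a = a'"
proof -
  have "p dvd m * (a - a')" using assms(4) by (metis mod_eq_dvd_iff right_diff_distrib)
  then have "p dvd (a - a')" using assms(1) pp prime_dvd_mult_iff by blast
  moreover have "\<bar>a - a'\<bar> < p" using assms(2,3) by auto
  ultimately show ?thesis using dvd_small[of p "a-a'"] by simp
qed

lemma mod_in_Cls:
  assumes "\<not> p dvd x" shows "x mod p \<in> Cls p (Legendre x p)"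
proof -
  have "x mod p \<noteq> 0" using assms by (simp add: dvd_eq_mod_eq_0)
  moreover have "x mod p \<ge> 0" "x mod p < p" using p2 by auto
  ultimately show ?thesis by (auto simp: Cls_def leg_mod)
qed

lemma Cls_ndvd: "a \<in> Cls p e \<Longrightarrow> \<not> p dvd a"
  by (auto simp: Cls_def dest: zdvd_imp_le)

lemma scale_le:
  assumes m: "\<not> p dvd m"
  shows "Fc p (Cls p e1) (Cls p e2) r \<le>
         Fc p (Cls p (Legendre m p * e1)) (Cls p (Legendre m p * e2)) ((m*r) mod p)"
  unfolding Fc_def
proof (rule card_inj_on_le[where f = "\<lambda>(a,b). ((m*a) mod p, (m*b) mod p)"])
  show "inj_on (\<lambda>(a,b). ((m*a) mod p, (m*b) mod p))
     {(a, b). a \<in> Cls p e1 \<and> b \<in> Cls p e2 \<and> (a - b) mod p = r}"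
  proof (rule inj_onI, clarify)
    fix a b a' b' assume h: "a \<in> Cls p e1" "b \<in> Cls p e2" "a' \<in> Cls p e1" "b' \<in> Cls p e2"
      "(m * a) mod p = (m * a') mod p" "(m * b) mod p = (m * b') mod p"
    then show "a = a' \<and> b = b'" using mult_inj[OF m] Cls_sub[of p] by blast
  qed
  show "finite {(a, b). a \<in> Cls p (Legendre m p * e1) \<and> b \<in> Cls p (Legendre m p * e2) \<and> (a - b) mod p = (m*r) mod p}"
    by (rule Fc_fin)
  show "(\<lambda>(a,b). ((m*a) mod p, (m*b) mod p)) ` {(a, b). a \<in> Cls p e1 \<and> b \<in> Cls p e2 \<and> (a - b) mod p = r}
    \<subseteq> {(a, b). a \<in> Cls p (Legendre m p * e1) \<and> b \<in> Cls p (Legendre m p * e2) \<and> (a - b) mod p = (m*r) mod p}"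
  proof -
    have key: "((m*a) mod p, (m*b) mod p) \<in> {(a, b). a \<in> Cls p (Legendre m p * e1) \<and> b \<in> Cls p (Legendre m p * e2) \<and> (a - b) mod p = (m*r) mod p}"
      if a: "a \<in> Cls p e1" and b: "b \<in> Cls p e2" and r: "(a - b) mod p = r" for a b
    proof -
    have na: "\<not> p dvd m*a" using m Cls_ndvd[OF a] pp prime_dvd_mult_iff by blast
    have nb: "\<not> p dvd m*b" using m Cls_ndvd[OF b] pp prime_dvd_mult_iff by blast
    have "Legendre (m*a) p = Legendre m p * e1" using a leg_mult[OF pp p2] by (simp add: Cls_def)
    then have A: "(m*a) mod p \<in> Cls p (Legendre m p * e1)" using mod_in_Cls[OF na] by simp
    have "Legendre (m*b) p = Legendre m p * e2" using b leg_mult[OF pp p2] by (simp add: Cls_def)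
    then have B: "(m*b) mod p \<in> Cls p (Legendre m p * e2)" using mod_in_Cls[OF nb] by simp
    have "((m*a) mod p - (m*b) mod p) mod p = (m*(a-b)) mod p"
      by (simp add: mod_diff_eq right_diff_distrib)
    also have "\<dots> = (m*r) mod p" using r by (metis mod_mult_right_eq)
    finally show ?thesis
      using A B by simp
  qed
    then show ?thesis by auto
  qed
qed

lemma inverse_ex:
  assumes "\<not> p dvd m"
  obtains m' where "\<not> p dvd m'" "(m*m') mod p = 1" "Legendre m' p = Legendre m p"
proof -
  have "coprime m p" using prime_imp_coprime[OF pp assms] by (simp add: ac_simps)
  then obtain m' where c: "[m*m' = 1] (mod p)" using cong_solve_coprime_int by blast
  then have e: "(m*m') mod p = 1" using p2 by (simp add: cong_def)
  have n': "\<not> p dvd m'"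
  proof
    assume "p dvd m'" then have "p dvd m*m'" by simp
    then show False using e p2 by (simp add: dvd_eq_mod_eq_0)
  qed
  have "Legendre m p * Legendre m' p = 1"
    using leg_mult[OF pp p2, of m m'] leg_mod[of "m*m'" p] e leg_one p2 by simp
  moreover have "Legendre m p = 1 \<or> Legendre m p = -1"
    using leg_pm[OF assms] by simp
  ultimately have "Legendre m' p = Legendre m p" by auto
  then show ?thesis using that n' e by blast
qed

lemma scale_eq:
  assumes m: "\<not> p dvd m" and r: "r \<in> {0..p-1}"
  shows "Fc p (Cls p e1) (Cls p e2) r =
         Fc p (Cls p (Legendre m p * e1)) (Cls p (Legendre m p * e2)) ((m*r) mod p)"
proof (rule antisym)
  show "Fc p (Cls p e1) (Cls p e2) r \<le> Fc p (Cls p (Legendre m p * e1)) (Cls p (Legendre m p * e2)) ((m*r) mod p)"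
    by (rule scale_le[OF m])
  obtain m' where m': "\<not> p dvd m'" "(m*m') mod p = 1" "Legendre m' p = Legendre m p"
    using inverse_ex[OF m] by blast
  have L: "Legendre m p * Legendre m p = 1"
    using leg_pm[OF m] by auto
  have "(m' * ((m*r) mod p)) mod p = ((m*m') mod p * r) mod p"
    by (metis mod_mult_right_eq mod_mult_left_eq mult.assoc mult.commute)
  also have "\<dots> = r" using m'(2) r by simp
  finally have R: "(m' * ((m*r) mod p)) mod p = r" .
  have "Fc p (Cls p (Legendre m p * e1)) (Cls p (Legendre m p * e2)) ((m*r) mod p)
     \<le> Fc p (Cls p (Legendre m' p * (Legendre m p * e1))) (Cls p (Legendre m' p * (Legendre m p * e2))) ((m' * ((m*r) mod p)) mod p)"
    by (rule scale_le[OF m'(1)])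
  also have "\<dots> = Fc p (Cls p e1) (Cls p e2) r"
    using R m'(3) L by (simp add: mult.assoc[symmetric])
  finally show "Fc p (Cls p (Legendre m p * e1)) (Cls p (Legendre m p * e2)) ((m*r) mod p) \<le> Fc p (Cls p e1) (Cls p e2) r" .
qed

lemma norm_eq:
  assumes r: "r \<in> {1..p-1}"
  shows "Fc p (Cls p e1) (Cls p e2) r = Fc p (Cls p (Legendre r p * e1)) (Cls p (Legendre r p * e2)) 1"
proof -
  have nr: "\<not> p dvd r" using r by (auto dest: zdvd_imp_le)
  obtain r' where r': "\<not> p dvd r'" "(r*r') mod p = 1" "Legendre r' p = Legendre r p"
    using inverse_ex[OF nr] by blast
  have "Fc p (Cls p e1) (Cls p e2) r = Fc p (Cls p (Legendre r' p * e1)) (Cls p (Legendre r' p * e2)) ((r'*r) mod p)"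
    by (rule scale_eq[OF r'(1)]) (use r in auto)
  then show ?thesis using r' by (simp add: mult.commute)
qed


lemma leg_negate: "Legendre (p - b) p = Legendre b p"
proof -
  have "Legendre (p - b) p = Legendre ((p - b) mod p) p" by (simp only: leg_mod)
  also have "(p - b) mod p = (-1 * b) mod p" using mod_add_self1[of p "-b"] by simp
  also have "Legendre ((-1 * b) mod p) p = Legendre (-1) p * Legendre b p"
    by (simp only: leg_mod leg_mult[OF pp p2])
  finally show ?thesis using leg_neg1[OF pp p4] by simp
qed

lemma swap_le: "Fc p (Cls p e1) (Cls p e2) r \<le> Fc p (Cls p e2) (Cls p e1) r"
  unfolding Fc_def
proof (rule card_inj_on_le[where f = "\<lambda>(a,b). (p - b, p - a)"])
  show "inj_on (\<lambda>(a,b). (p - b, p - a)) {(a, b). a \<in> Cls p e1 \<and> b \<in> Cls p e2 \<and> (a - b) mod p = r}"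
    by (auto simp: inj_on_def)
  show "finite {(a, b). a \<in> Cls p e2 \<and> b \<in> Cls p e1 \<and> (a - b) mod p = r}" by (rule Fc_fin)
  show "(\<lambda>(a,b). (p - b, p - a)) ` {(a, b). a \<in> Cls p e1 \<and> b \<in> Cls p e2 \<and> (a - b) mod p = r}
     \<subseteq> {(a, b). a \<in> Cls p e2 \<and> b \<in> Cls p e1 \<and> (a - b) mod p = r}"
    using leg_negate by (auto simp: Cls_def)
qed

lemma swap_eq: "Fc p (Cls p e1) (Cls p e2) r = Fc p (Cls p e2) (Cls p e1) r"
  using swap_le[of e1 e2 r] swap_le[of e2 e1 r] by simp

lemma Cls_union: "Cls p 1 \<union> Cls p (-1) = {1..p-1}"
proof -
  have "\<And>x. 1 \<le> x \<Longrightarrow> x < p \<Longrightarrow> Legendre x p = 1 \<or> Legendre x p = -1" using leg_nz[OF pp] by auto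
  then show ?thesis unfolding Cls_def by (intro equalityI subsetI) auto
qed

lemma Cls_disj: "Cls p 1 \<inter> Cls p (-1) = {}"
  by (auto simp: Cls_def)

lemma row_eq:
  assumes X: "X \<subseteq> {1..p-1}" and r: "r \<in> {1..p-1}"
  shows "Fc p X (Cls p 1) r + Fc p X (Cls p (-1)) r = card {a \<in> X. a \<noteq> r}"
proof -
  have fX: "finite X" using X by (rule finite_subset) auto
  let ?S = "\<lambda>Y. {(a,b). a \<in> X \<and> b \<in> Y \<and> (a - b) mod p = r}"
  have f: "finite (?S Y)" if "finite Y" for Y
    by (rule finite_subset[of _ "X \<times> Y"]) (use fX that in auto)
  have "Fc p X (Cls p 1) r + Fc p X (Cls p (-1)) r = card (?S (Cls p 1) \<union> ?S (Cls p (-1)))"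
    unfolding Fc_def by (rule card_Un_disjoint[symmetric]) (use f Cls_disj in auto)
  also have "?S (Cls p 1) \<union> ?S (Cls p (-1)) = ?S {1..p-1}"
    using Cls_union by blast
  also have "?S {1..p-1} = (\<lambda>a. (a, (a - r) mod p)) ` {a \<in> X. a \<noteq> r}"
  proof (intro equalityI subsetI)
    fix z assume "z \<in> ?S {1..p-1}"
    then obtain a b where z: "z = (a,b)" "a \<in> X" "b \<in> {1..p-1}" "(a - b) mod p = r" by blast
    have "(a - r) mod p = (a - (a - b)) mod p" using z(4) by (metis mod_diff_right_eq)
    also have "\<dots> = b" using z(3) by simp
    finally have b: "(a - r) mod p = b" .
    have "a \<noteq> r"
    proof
      assume "a = r"
      then have "b mod p = 0" using b by simp
      then show False using z(3) by simp
    qed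
    then show "z \<in> (\<lambda>a. (a, (a - r) mod p)) ` {a \<in> X. a \<noteq> r}" using z b by auto
  next
    fix z assume "z \<in> (\<lambda>a. (a, (a - r) mod p)) ` {a \<in> X. a \<noteq> r}"
    then obtain a where z: "z = (a, (a - r) mod p)" "a \<in> X" "a \<noteq> r" by blast
    have "(a - r) mod p \<noteq> 0"
    proof
      assume "(a - r) mod p = 0"
      then have "p dvd (a - r)" by (simp add: dvd_eq_mod_eq_0)
      moreover have "\<bar>a - r\<bar> < p"
      proof -
        have "a \<in> {1..p-1}" using X z(2) by blast
        then show ?thesis using r by auto
      qed
      ultimately show False using dvd_small[of p "a-r"] z(3) by simp
    qed
    moreover have "(a - r) mod p \<ge> 0" "(a - r) mod p < p" using p2 by auto
    moreover have "(a - (a - r) mod p) mod p = r"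
    proof -
      have "(a - (a - r) mod p) mod p = (a - (a - r)) mod p" by (metis mod_diff_right_eq)
      then show ?thesis using r by simp
    qed
    ultimately show "z \<in> ?S {1..p-1}" using z by auto
  qed
  also have "card \<dots> = card {a \<in> X. a \<noteq> r}"
    by (rule card_image) (auto simp: inj_on_def)
  finally show ?thesis .
qed

lemma zero_eq:
  "Fc p (Cls p e1) (Cls p e2) 0 = card (Cls p e1 \<inter> Cls p e2)"
proof -
  have "{(a,b). a \<in> Cls p e1 \<and> b \<in> Cls p e2 \<and> (a - b) mod p = 0} = (\<lambda>a. (a,a)) ` (Cls p e1 \<inter> Cls p e2)"
  proof (rule equalityI; rule subsetI)
    fix z assume "z \<in> {(a,b). a \<in> Cls p e1 \<and> b \<in> Cls p e2 \<and> (a - b) mod p = 0}"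
    then obtain a b where z: "z = (a,b)" "a \<in> Cls p e1" "b \<in> Cls p e2" "(a - b) mod p = 0" by (cases z) simp
    have "p dvd (a - b)" using z(4) by (simp add: dvd_eq_mod_eq_0)
    moreover have "\<bar>a - b\<bar> < p"
    proof -
      have "a \<in> {1..p-1}" "b \<in> {1..p-1}" using z(2,3) Cls_sub[of p] by blast+
      then show ?thesis by auto
    qed
    ultimately have "a = b" using dvd_small[of p "a-b"] by simp
    then show "z \<in> (\<lambda>a. (a,a)) ` (Cls p e1 \<inter> Cls p e2)" using z by auto
  next
    fix z assume "z \<in> (\<lambda>a. (a,a)) ` (Cls p e1 \<inter> Cls p e2)"
    then obtain a where "z = (a,a)" "a \<in> Cls p e1" "a \<in> Cls p e2" by blast
    then show "z \<in> {(a,b). a \<in> Cls p e1 \<and> b \<in> Cls p e2 \<and> (a - b) mod p = 0}" by simp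
  qed
  then have "Fc p (Cls p e1) (Cls p e2) 0 = card ((\<lambda>a. (a,a)) ` (Cls p e1 \<inter> Cls p e2))"
    unfolding Fc_def by (rule arg_cong)
  also have "\<dots> = card (Cls p e1 \<inter> Cls p e2)" by (rule card_image) (simp add: inj_on_def)
  finally show ?thesis .
qed

lemma total_eq:
  assumes X: "X \<subseteq> {1..p-1}"
  shows "(\<Sum>r\<in>{1..p-1}. Fc p X X r) = card X * card X - card X"
proof -
  have fX: "finite X" using X by (rule finite_subset) auto
  let ?S = "\<lambda>r. {(a,b). a \<in> X \<and> b \<in> X \<and> (a - b) mod p = r}"
  have U: "(\<Union>r\<in>{1..p-1}. ?S r) = (X \<times> X) - Id_on X"
  proof (intro equalityI subsetI)
    fix z assume "z \<in> (\<Union>r\<in>{1..p-1}. ?S r)"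
    then show "z \<in> (X \<times> X) - Id_on X" by auto
  next
    fix z assume "z \<in> (X \<times> X) - Id_on X"
    then obtain a b where z: "z = (a,b)" "a \<in> X" "b \<in> X" "a \<noteq> b" by auto
    have "(a - b) mod p \<noteq> 0"
    proof
      assume "(a - b) mod p = 0"
      then have "p dvd (a - b)" by (simp add: dvd_eq_mod_eq_0)
      moreover have "\<bar>a - b\<bar> < p"
      proof -
        have "a \<in> {1..p-1}" "b \<in> {1..p-1}" using X z by blast+
        then show ?thesis by auto
      qed
      ultimately show False using dvd_small[of p "a-b"] z(4) by simp
    qed
    moreover have "(a - b) mod p \<ge> 0" "(a - b) mod p < p" using p2 by auto
    ultimately have "(a - b) mod p \<in> {1..p-1}" by auto
    then show "z \<in> (\<Union>r\<in>{1..p-1}. ?S r)" using z by auto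
  qed
  have "(\<Sum>r\<in>{1..p-1}. Fc p X X r) = card (\<Union>r\<in>{1..p-1}. ?S r)"
    unfolding Fc_def
    by (rule card_UN_disjoint[symmetric])
       (auto intro: finite_subset[of _ "X \<times> X"] simp: fX)
  also have "\<dots> = card (X \<times> X) - card (Id_on X)"
    unfolding U by (rule card_Diff_subset) (auto simp: fX Id_on_def)
  also have "card (Id_on X) = card X"
  proof -
    have "Id_on X = (\<lambda>x. (x,x)) ` X" by auto
    then show ?thesis by (simp add: card_image inj_on_def)
  qed
  finally show ?thesis by (simp add: card_cartesian_product)
qed


lemma card_all: "card (Cls p 1) + card (Cls p (-1)) = nat (p - 1)"
proof -
  have "card (Cls p 1) + card (Cls p (-1)) = card (Cls p 1 \<union> Cls p (-1))"
    by (rule card_Un_disjoint[symmetric]) (use Cls_disj in auto)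
  also have "\<dots> = nat (p - 1)" using Cls_union by simp
  finally show ?thesis .
qed

lemma card_Q_le: "card (Cls p 1) \<le> nat ((p - 1) div 2)"
proof -
  have sub: "Cls p 1 \<subseteq> (\<lambda>x. x^2 mod p) ` {1..(p-1) div 2}"
  proof
    fix s assume s: "s \<in> Cls p 1"
    then have s1: "s \<in> {1..p-1}" and L: "Legendre s p = 1" by (auto simp: Cls_def)
    have "QuadRes p s" using L by (auto simp: Legendre_def split: if_splits)
    then obtain y where y: "[y^2 = s] (mod p)" by (auto simp: QuadRes_def)
    define y0 where "y0 = y mod p"
    have "y0^2 mod p = y^2 mod p" unfolding y0_def by (simp add: power_mod)
    also have "\<dots> = s" using y s1 by (simp add: cong_def)
    finally have y0s: "y0^2 mod p = s" .
    have y0r: "0 \<le> y0" "y0 < p" unfolding y0_def using p2 by auto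
    have "y0 \<noteq> 0" using y0s s1 by auto
    show "s \<in> (\<lambda>x. x^2 mod p) ` {1..(p-1) div 2}"
    proof (cases "y0 \<le> (p-1) div 2")
      case True
      then show ?thesis using y0s y0r \<open>y0 \<noteq> 0\<close> by (intro image_eqI[of _ _ y0]) auto
    next
      case False
      have "[p - y0 = - y0] (mod p)" by (simp add: cong_def mod_diff_left_eq[symmetric])
      then have "[(p - y0)^2 = (- y0)^2] (mod p)" by (rule cong_pow)
      then have "(p - y0)^2 mod p = s" using y0s by (simp add: cong_def)
      moreover have "p - y0 \<in> {1..(p-1) div 2}"
      proof -
        have k: "p = 4 * (p div 4) + 1" using pmod4 div_mult_mod_eq[of p 4] by linarith
        then have "(p - 1) div 2 = 2 * (p div 4)" by linarith
        then show ?thesis using False y0r k by auto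
      qed
      ultimately show ?thesis by (intro image_eqI[of _ _ "p - y0"]) auto
    qed
  qed
  have "card (Cls p 1) \<le> card ((\<lambda>x. x^2 mod p) ` {1..(p-1) div 2})"
    by (rule card_mono[OF _ sub]) simp
  also have "\<dots> \<le> card {1..(p-1) div 2}" by (rule card_image_le) simp
  also have "\<dots> = nat ((p - 1) div 2)" by simp
  finally show ?thesis .
qed

lemma card_N_le_Q:
  assumes "n \<in> Cls p (-1)"
  shows "card (Cls p (-1)) \<le> card (Cls p 1)"
proof (rule card_inj_on_le[where f = "\<lambda>x. (n*x) mod p"])
  have nn: "\<not> p dvd n" using Cls_ndvd[OF assms] .
  show "inj_on (\<lambda>x. (n*x) mod p) (Cls p (-1))"
  proof (rule inj_onI)
    fix x y assume "x \<in> Cls p (-1)" "y \<in> Cls p (-1)" "(n*x) mod p = (n*y) mod p"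
    then show "x = y" using mult_inj[OF nn, of x y] Cls_sub[of p "-1"] by blast
  qed
  show "(\<lambda>x. (n*x) mod p) ` Cls p (-1) \<subseteq> Cls p 1"
  proof
    fix z assume "z \<in> (\<lambda>x. (n*x) mod p) ` Cls p (-1)"
    then obtain x where x: "x \<in> Cls p (-1)" "z = (n*x) mod p" by blast
    have nx: "\<not> p dvd n*x" using nn Cls_ndvd[OF x(1)] pp prime_dvd_mult_iff by blast
    have "Legendre (n*x) p = 1" using leg_mult[OF pp p2, of n x] assms x(1) by (simp add: Cls_def)
    then show "z \<in> Cls p 1" using mod_in_Cls[OF nx] x(2) by simp
  qed
  show "finite (Cls p 1)" by simp
qed

lemma card_Q: "card (Cls p 1) = nat ((p - 1) div 2)"
  and card_N: "card (Cls p (-1)) = nat ((p - 1) div 2)"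
proof -
  have A: "card (Cls p 1) + card (Cls p (-1)) = nat (p - 1)" by (rule card_all)
  have B: "card (Cls p 1) \<le> nat ((p - 1) div 2)" by (rule card_Q_le)
  have "card (Cls p (-1)) > 0" using A B p2 by linarith
  then obtain n where "n \<in> Cls p (-1)" by (metis card_0_eq ex_in_conv finite_Cls gr_implies_not0)
  then have C: "card (Cls p (-1)) \<le> card (Cls p 1)" by (rule card_N_le_Q)
  show "card (Cls p 1) = nat ((p - 1) div 2)" using A B C p2 by linarith
  show "card (Cls p (-1)) = nat ((p - 1) div 2)" using A B C p2 by linarith
qed

lemma one_Q: "1 \<in> Cls p 1" using p2 leg_one by (auto simp: Cls_def)

lemma card_minus: "finite X \<Longrightarrow> card {a \<in> X. a \<noteq> r} = card X - (if r \<in> X then 1 else 0)"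
proof -
  assume f: "finite X"
  have "{a \<in> X. a \<noteq> r} = X - {r}" by auto
  then show ?thesis using f by (simp add: card_Diff_singleton_if)
qed

lemma vals:
  "int (Fc p (Cls p 1) (Cls p 1) 1) = (p - 5) div 4 \<and>
   int (Fc p (Cls p (-1)) (Cls p (-1)) 1) = (p - 1) div 4 \<and>
   int (Fc p (Cls p 1) (Cls p (-1)) 1) = (p - 1) div 4 \<and>
   int (Fc p (Cls p (-1)) (Cls p 1) 1) = (p - 1) div 4"
proof -
  let ?Q = "Cls p 1" and ?N = "Cls p (-1)"
  define a where "a = Fc p ?Q ?Q 1"
  define b where "b = Fc p ?N ?N 1"
  define c where "c = Fc p ?Q ?N 1"
  define d where "d = Fc p ?N ?Q 1"
  define h where "h = nat ((p - 1) div 2)"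
  have cQ: "card ?Q = h" and cN: "card ?N = h" using card_Q card_N h_def by auto
  have sumQ: "(\<Sum>r\<in>?Q. Fc p ?Q ?Q r) = h * a"
  proof -
    have "(\<Sum>r\<in>?Q. Fc p ?Q ?Q r) = (\<Sum>r\<in>?Q. a)"
    proof (rule sum.cong[OF refl])
      fix r assume r: "r \<in> ?Q"
      then have "r \<in> {1..p-1}" "Legendre r p = 1" by (auto simp: Cls_def)
      then show "Fc p ?Q ?Q r = a" using norm_eq[of r 1 1] a_def by simp
    qed
    then show ?thesis using cQ by simp
  qed
  have sumN: "(\<Sum>r\<in>?N. Fc p ?Q ?Q r) = h * b"
  proof -
    have "(\<Sum>r\<in>?N. Fc p ?Q ?Q r) = (\<Sum>r\<in>?N. b)"
    proof (rule sum.cong[OF refl])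
      fix r assume r: "r \<in> ?N"
      then have "r \<in> {1..p-1}" "Legendre r p = -1" by (auto simp: Cls_def)
      then show "Fc p ?Q ?Q r = b" using norm_eq[of r 1 1] b_def by simp
    qed
    then show ?thesis using cN by simp
  qed
  have "(\<Sum>r\<in>{1..p-1}. Fc p ?Q ?Q r) = (\<Sum>r\<in>?Q. Fc p ?Q ?Q r) + (\<Sum>r\<in>?N. Fc p ?Q ?Q r)"
    unfolding Cls_union[symmetric] by (rule sum.union_disjoint) (use Cls_disj in auto)
  then have T: "h * a + h * b = h * h - h" using total_eq[OF Cls_sub[of p 1]] sumQ sumN cQ by simp
  have R1: "a + c = h - 1"
    using row_eq[OF Cls_sub[of p 1], of 1] p2 one_Q card_minus[of ?Q 1] cQ a_def c_def by simp
  have "1 \<notin> ?N" using one_Q Cls_disj by auto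
  then have R2: "d + b = h"
    using row_eq[OF Cls_sub[of p "-1"], of 1] p2 card_minus[of ?N 1] cN b_def d_def by simp
  have S: "c = d" using swap_eq c_def d_def by simp
  have h: "int h = (p - 1) div 2" using h_def p2 by simp
  have hp: "h > 0" using h_def p2 by simp
  have T': "int h * (int a + int b) = int h * (int h - 1)"
  proof -
    have "int (h * a + h * b) = int (h * h - h)" using T by simp
    moreover have "h * h \<ge> h" by simp
    ultimately show ?thesis by (simp add: of_nat_diff algebra_simps)
  qed
  then have T'': "int a + int b = int h - 1" using hp by simp
  have R1': "int a + int c = int h - 1" using R1 hp by linarith
  have R2': "int d + int b = int h" using R2 by linarith
  have k: "p = 4 * (p div 4) + 1" using pmod4 div_mult_mod_eq[of p 4] by linarith
  have "(p - 1) div 2 = 2 * (p div 4)" using k by linarith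
  moreover have "(p - 1) div 4 = p div 4" using k by linarith
  moreover have "(p - 5) div 4 = p div 4 - 1" using k by linarith
  ultimately show ?thesis using T'' R1' R2' S h unfolding a_def[symmetric] b_def[symmetric] c_def[symmetric] d_def[symmetric]
    by linarith
qed

lemma QQ_r:
  assumes r: "r \<in> {1..p-1}"
  shows "int (Fc p (Cls p 1) (Cls p 1) r) = (if Legendre r p = 1 then (p - 5) div 4 else (p - 1) div 4)"
    and "int (Fc p (Cls p (-1)) (Cls p (-1)) r) = (if Legendre r p = 1 then (p - 1) div 4 else (p - 5) div 4)"
    and "int (Fc p (Cls p 1) (Cls p (-1)) r) + int (Fc p (Cls p (-1)) (Cls p 1) r) = (p - 1) div 2"
proof -
  have L: "Legendre r p = 1 \<or> Legendre r p = -1" using leg_nz[OF pp r] .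
  have k: "p = 4 * (p div 4) + 1" using pmod4 div_mult_mod_eq[of p 4] by linarith
  have e1: "(p - 1) div 2 = 2 * (p div 4)" using k by linarith
  have e2: "(p - 1) div 4 = p div 4" using k by linarith
  have e: "(p - 1) div 2 = (p - 1) div 4 + (p - 1) div 4" using e1 e2 by simp
  show "int (Fc p (Cls p 1) (Cls p 1) r) = (if Legendre r p = 1 then (p - 5) div 4 else (p - 1) div 4)"
    using L norm_eq[OF r, of 1 1] vals by auto
  show "int (Fc p (Cls p (-1)) (Cls p (-1)) r) = (if Legendre r p = 1 then (p - 1) div 4 else (p - 5) div 4)"
    using L norm_eq[OF r, of "-1" "-1"] vals by auto
  show "int (Fc p (Cls p 1) (Cls p (-1)) r) + int (Fc p (Cls p (-1)) (Cls p 1) r) = (p - 1) div 2"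
    using L norm_eq[OF r, of 1 "-1"] norm_eq[OF r, of "-1" 1] vals e by auto
qed

end



definition lift :: "int \<Rightarrow> int set \<Rightarrow> int set" where
  "lift p X = X \<union> (\<lambda>s. s + p) ` X"

lemma count_img:
  assumes "finite S"
  shows "count (image_mset f (mset_set S)) x = card {z \<in> S. f z = x}"
proof -
  have "count (image_mset f (mset_set S)) x = (\<Sum>y\<in>f -` {x} \<inter> S. count (mset_set S) y)"
    by (simp add: count_image_mset assms)
  also have "\<dots> = (\<Sum>y\<in>f -` {x} \<inter> S. 1)"
    by (rule sum.cong) (use assms in auto)
  also have "\<dots> = card (f -` {x} \<inter> S)" by simp
  also have "f -` {x} \<inter> S = {z \<in> S. f z = x}" by auto
  finally show ?thesis .
qed

lemma card_filter_sum:
  "finite A \<Longrightarrow> card {x \<in> A. P x} = (\<Sum>x\<in>A. if P x then 1 else 0)"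
  by (simp add: sum.inter_filter[symmetric])

lemma sum_lift:
  fixes h :: "int \<Rightarrow> nat"
  assumes "p > 0" "X \<subseteq> {1..p-1}"
  shows "(\<Sum>x\<in>lift p X. h x) = (\<Sum>x\<in>X. h x + h (x + p))"
proof -
  have f: "finite X" using assms(2) by (rule finite_subset) auto
  have mem: "\<And>s. s \<in> X \<Longrightarrow> 1 \<le> s \<and> s \<le> p - 1" using assms(2) atLeastAtMost_iff by blast
  have dj: "X \<inter> (\<lambda>s. s + p) ` X = {}"
  proof (rule ccontr)
    assume "X \<inter> (\<lambda>s. s + p) ` X \<noteq> {}"
    then obtain s where "s \<in> X" "s + p \<in> X" by blast
    then show False using mem[of s] mem[of "s+p"] by linarith
  qed
  have "(\<Sum>x\<in>lift p X. h x) = (\<Sum>x\<in>X. h x) + (\<Sum>x\<in>(\<lambda>s. s + p) ` X. h x)"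
    unfolding lift_def by (rule sum.union_disjoint) (use f dj in auto)
  also have "(\<Sum>x\<in>(\<lambda>s. s + p) ` X. h x) = (\<Sum>x\<in>X. h (x + p))"
    by (subst sum.reindex) (auto simp: inj_on_def)
  finally show ?thesis by (simp add: sum.distrib)
qed

lemma four:
  fixes p d x y :: int
  assumes "p > 0" "0 \<le> d" "d < 2*p"
  shows "(if (x - y) mod (2*p) = d then 1 else 0) + (if (x - (y + p)) mod (2*p) = d then 1 else 0)
       + ((if (x + p - y) mod (2*p) = d then 1 else 0) + (if (x + p - (y + p)) mod (2*p) = d then 1 else 0))
       = (2::nat) * (if (x - y) mod p = d mod p then 1 else 0)"
proof -
  define c where "c = x - y"
  define s where "s = c mod (2*p)"
  have s: "0 \<le> s" "s < 2*p" unfolding s_def using assms by auto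
  have e1: "(x - (y + p)) mod (2*p) = (s + p) mod (2*p)"
  proof -
    have "x - (y + p) = (c + p) + (-1) * (2*p)" unfolding c_def by simp
    then have "(x - (y + p)) mod (2*p) = (c + p) mod (2*p)" by (metis mod_mult_self1)
    also have "\<dots> = (s + p) mod (2*p)" unfolding s_def by (simp add: mod_add_left_eq)
    finally show ?thesis .
  qed
  have e2: "(x + p - y) mod (2*p) = (s + p) mod (2*p)"
  proof -
    have "x + p - y = c + p" unfolding c_def by simp
    then have "(x + p - y) mod (2*p) = (c + p) mod (2*p)" by (rule arg_cong[where f="\<lambda>t. t mod (2*p)"])
    also have "\<dots> = (s + p) mod (2*p)" unfolding s_def by (simp add: mod_add_left_eq)
    finally show ?thesis .
  qed
  have e3: "(x + p - (y + p)) mod (2*p) = s" unfolding s_def c_def by simp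
  have e4: "(x - y) mod p = s mod p"
    unfolding s_def c_def by (simp add: mod_mod_cancel)
  have t: "(s + p) mod (2*p) = (if s < p then s + p else s - p)"
  proof (cases "s < p")
    case True
    have h: "(s + p) mod (2*p) = s + p" using s assms True by (intro mod_pos_pos_trivial) auto
    show ?thesis by (simp only: True if_True h)
  next
    case False
    have "(s + p) mod (2*p) = (s - p + 1 * (2*p)) mod (2*p)" by (rule arg_cong[where f="\<lambda>t. t mod (2*p)"]) simp
    also have "\<dots> = (s - p) mod (2*p)" by (rule mod_mult_self1)
    also have "\<dots> = s - p" using False s by (intro mod_pos_pos_trivial) auto
    finally show ?thesis using False by simp
  qed
  have sm: "s mod p = (if s < p then s else s - p)"
  proof (cases "s < p")
    case True then show ?thesis using s by (simp add: mod_pos_pos_trivial)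
  next
    case False
    have "s mod p = (s - p + 1 * p) mod p" by simp
    also have "\<dots> = (s - p) mod p" by (rule mod_mult_self1)
    also have "\<dots> = s - p" using False s by (intro mod_pos_pos_trivial) auto
    finally show ?thesis using False by simp
  qed
  have dm: "d mod p = (if d < p then d else d - p)"
  proof (cases "d < p")
    case True then show ?thesis using assms by (simp add: mod_pos_pos_trivial)
  next
    case False
    have "d mod p = (d - p + 1 * p) mod p" by simp
    also have "\<dots> = (d - p) mod p" by (rule mod_mult_self1)
    also have "\<dots> = d - p" using False assms by (intro mod_pos_pos_trivial) auto
    finally show ?thesis using False by simp
  qed
  show ?thesis
    unfolding e1 e2 e3 e4 t sm dm
    using s assms unfolding s_def[symmetric] c_def[symmetric]
    by (auto split: if_splits)
qed


lemma finite_lift: "X \<subseteq> {1..p-1} \<Longrightarrow> finite (lift p X)"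
  unfolding lift_def by (auto intro: finite_subset)

lemma Delta2_lift_count:
  assumes p: "p > 0" and X: "X \<subseteq> {1..p-1}" and Y: "Y \<subseteq> {1..p-1}"
  shows "count (Delta2 (2*p) (lift p X) (lift p Y)) d =
         (if 0 \<le> d \<and> d < 2*p then 2 * Fc p X Y (d mod p) else 0)"
proof -
  have fX: "finite X" using X by (rule finite_subset) auto
  have fY: "finite Y" using Y by (rule finite_subset) auto
  have fL: "finite (lift p X \<times> lift p Y)" using finite_lift[OF X] finite_lift[OF Y] by simp
  have c0: "count (Delta2 (2*p) (lift p X) (lift p Y)) d =
        card {z \<in> lift p X \<times> lift p Y. (\<lambda>(x,y). (x - y) mod (2*p)) z = d}"
    unfolding Delta2_def by (rule count_img[OF fL])
  show ?thesis
  proof (cases "0 \<le> d \<and> d < 2*p")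
    case False
    have E: "{z \<in> lift p X \<times> lift p Y. (\<lambda>(x,y). (x - y) mod (2*p)) z = d} = {}"
    proof (rule ccontr)
      assume "{z \<in> lift p X \<times> lift p Y. (\<lambda>(x,y). (x - y) mod (2*p)) z = d} \<noteq> {}"
      then obtain x y where "(x - y) mod (2*p) = d" by auto
      moreover have "0 \<le> (x - y) mod (2*p)" "(x - y) mod (2*p) < 2*p" using p by auto
      ultimately show False using False by auto
    qed
    show ?thesis unfolding c0 E using False by auto
  next
    case True
    define g where "g = (\<lambda>x y. if (x - y) mod (2*p) = d then 1 else (0::nat))"
    define ind where "ind = (\<lambda>x y. if (x - y) mod p = d mod p then 1 else (0::nat))"
    have "card {z \<in> lift p X \<times> lift p Y. (\<lambda>(x,y). (x - y) mod (2*p)) z = d}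
        = (\<Sum>z\<in>lift p X \<times> lift p Y. if (\<lambda>(x,y). (x - y) mod (2*p)) z = d then 1 else 0)"
      by (rule card_filter_sum[OF fL])
    also have "\<dots> = (\<Sum>(x,y)\<in>lift p X \<times> lift p Y. g x y)"
      by (rule sum.cong) (auto simp: g_def)
    also have "\<dots> = (\<Sum>x\<in>lift p X. \<Sum>y\<in>lift p Y. g x y)"
      by (rule sum.cartesian_product[symmetric])
    also have "\<dots> = (\<Sum>x\<in>lift p X. \<Sum>y\<in>Y. g x y + g x (y + p))"
      by (rule sum.cong[OF refl], rule sum_lift[OF p Y])
    also have "\<dots> = (\<Sum>x\<in>X. (\<Sum>y\<in>Y. g x y + g x (y + p)) + (\<Sum>y\<in>Y. g (x + p) y + g (x + p) (y + p)))"
      by (rule sum_lift[OF p X])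
    also have "\<dots> = (\<Sum>x\<in>X. \<Sum>y\<in>Y. 2 * ind x y)"
    proof (rule sum.cong[OF refl])
      fix x assume "x \<in> X"
      have "(\<Sum>y\<in>Y. g x y + g x (y + p)) + (\<Sum>y\<in>Y. g (x + p) y + g (x + p) (y + p))
          = (\<Sum>y\<in>Y. (g x y + g x (y + p)) + (g (x + p) y + g (x + p) (y + p)))"
        by (rule sum.distrib[symmetric])
      also have "\<dots> = (\<Sum>y\<in>Y. 2 * ind x y)"
        by (rule sum.cong[OF refl]) (unfold g_def ind_def, rule four, use p True in auto)
      finally show "(\<Sum>y\<in>Y. g x y + g x (y + p)) + (\<Sum>y\<in>Y. g (x + p) y + g (x + p) (y + p)) = (\<Sum>y\<in>Y. 2 * ind x y)" .
    qed
    also have "\<dots> = 2 * (\<Sum>(x,y)\<in>X \<times> Y. ind x y)"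
      by (simp add: sum_distrib_left sum.cartesian_product) (rule sum.cong, auto)
    also have "(\<Sum>(x,y)\<in>X \<times> Y. ind x y) = card {z \<in> X \<times> Y. (\<lambda>(a,b). (a - b) mod p = d mod p) z}"
      by (subst card_filter_sum) (auto simp: fX fY ind_def intro!: sum.cong)
    also have "{z \<in> X \<times> Y. (\<lambda>(a,b). (a - b) mod p = d mod p) z} = {(a,b). a \<in> X \<and> b \<in> Y \<and> (a - b) mod p = d mod p}"
      by auto
    finally show ?thesis using c0 True by (simp add: Fc_def)
  qed
qed

lemma Delta_lift_count:
  assumes p: "p > 0" and X: "X \<subseteq> {1..p-1}"
  shows "count (Delta (2*p) (lift p X)) d =
         (if 0 < d \<and> d < 2*p then 2 * Fc p X X (d mod p) else 0)"
proof -
  have fL: "finite (lift p X \<times> lift p X)" using finite_lift[OF X] by simp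
  have sub: "lift p X \<subseteq> {0..<2*p}" unfolding lift_def using X by auto
  have fS: "finite {(x, y). x \<in> lift p X \<and> y \<in> lift p X \<and> x \<noteq> y}"
    by (rule finite_subset[OF _ fL]) auto
  have c0: "count (Delta (2*p) (lift p X)) d =
        card {z \<in> {(x, y). x \<in> lift p X \<and> y \<in> lift p X \<and> x \<noteq> y}. (\<lambda>(x,y). (x - y) mod (2*p)) z = d}"
    unfolding Delta_def by (rule count_img[OF fS])
  have c1: "count (Delta2 (2*p) (lift p X) (lift p X)) d =
        card {z \<in> lift p X \<times> lift p X. (\<lambda>(x,y). (x - y) mod (2*p)) z = d}"
    unfolding Delta2_def by (rule count_img[OF fL])
  show ?thesis
  proof (cases "d = 0")
    case True
    have E: "{z \<in> {(x, y). x \<in> lift p X \<and> y \<in> lift p X \<and> x \<noteq> y}. (\<lambda>(x,y). (x - y) mod (2*p)) z = d} = {}"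
    proof (rule ccontr)
      assume "{z \<in> {(x, y). x \<in> lift p X \<and> y \<in> lift p X \<and> x \<noteq> y}. (\<lambda>(x,y). (x - y) mod (2*p)) z = d} \<noteq> {}"
      then obtain x y where xy: "x \<in> lift p X" "y \<in> lift p X" "x \<noteq> y" "(x - y) mod (2*p) = 0" using True by auto
      have "2*p dvd (x - y)" using xy(4) by (simp add: dvd_eq_mod_eq_0)
      moreover have "x \<in> {0..<2*p}" "y \<in> {0..<2*p}" using xy(1,2) sub by blast+
      then have "\<bar>x - y\<bar> < 2*p" by auto
      ultimately have "x - y = 0" by (rule dvd_small)
      then show False using xy(3) by simp
    qed
    show ?thesis unfolding c0 E using True by auto
  next
    case False
    have "{z \<in> {(x, y). x \<in> lift p X \<and> y \<in> lift p X \<and> x \<noteq> y}. (\<lambda>(x,y). (x - y) mod (2*p)) z = d}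
        = {z \<in> lift p X \<times> lift p X. (\<lambda>(x,y). (x - y) mod (2*p)) z = d}"
      using False by auto
    then have "count (Delta (2*p) (lift p X)) d = count (Delta2 (2*p) (lift p X) (lift p X)) d"
      using c0 c1 by simp
    then show ?thesis using Delta2_lift_count[OF p X X, of d] False by auto
  qed
qed

lemma count_mcopies: "finite X \<Longrightarrow> count (mcopies l X) d = (if d \<in> X then l else 0)"
  by (simp add: mcopies_def)


lemma mod_2p:
  fixes d p :: int
  assumes "p > 0" "0 \<le> d" "d < 2*p"
  shows "d mod p = (if d < p then d else d - p)"
proof (cases "d < p")
  case True then show ?thesis using assms by (simp add: mod_pos_pos_trivial)
next
  case False
  have "d mod p = (d - p + 1 * p) mod p" by simp
  also have "\<dots> = (d - p) mod p" by (rule mod_mult_self1)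
  also have "\<dots> = d - p" using False assms by (intro mod_pos_pos_trivial) auto
  finally show ?thesis using False by simp
qed

lemma mem_lift:
  assumes p: "p > 0" and X: "X \<subseteq> {1..p-1}"
  shows "d \<in> lift p X \<longleftrightarrow> (0 < d \<and> d < 2*p \<and> d mod p \<in> X)"
proof
  assume "d \<in> lift p X"
  then consider "d \<in> X" | s where "s \<in> X" "d = s + p" unfolding lift_def by blast
  then show "0 < d \<and> d < 2*p \<and> d mod p \<in> X"
  proof cases
    case 1
    then have "d \<in> {1..p-1}" using X by blast
    then show ?thesis using 1 mod_2p[OF p, of d] by auto
  next
    case 2
    then have "s \<in> {1..p-1}" using X by blast
    then show ?thesis using 2 mod_2p[OF p, of d] by auto
  qed
next
  assume h: "0 < d \<and> d < 2*p \<and> d mod p \<in> X"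
  show "d \<in> lift p X"
  proof (cases "d < p")
    case True
    then have "d \<in> X" using h mod_2p[OF p, of d] by auto
    then show ?thesis unfolding lift_def by blast
  next
    case False
    then have "d - p \<in> X" using h mod_2p[OF p, of d] by auto
    then have "d \<in> (\<lambda>s. s + p) ` X" by (intro image_eqI[of _ _ "d - p"]) auto
    then show ?thesis unfolding lift_def by blast
  qed
qed

lemma card_lift:
  assumes p: "p > 0" and X: "X \<subseteq> {1..p-1}"
  shows "card (lift p X) = 2 * card X"
proof -
  have fX: "finite X" using X by (rule finite_subset) auto
  have mem: "\<And>s. s \<in> X \<Longrightarrow> 1 \<le> s \<and> s \<le> p - 1" using X atLeastAtMost_iff by blast
  have dj: "X \<inter> (\<lambda>s. s + p) ` X = {}"
  proof (rule ccontr)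
    assume "X \<inter> (\<lambda>s. s + p) ` X \<noteq> {}"
    then obtain s where "s \<in> X" "s + p \<in> X" by blast
    then show False using mem[of s] mem[of "s+p"] by linarith
  qed
  have "card (lift p X) = card X + card ((\<lambda>s. s + p) ` X)"
    unfolding lift_def by (rule card_Un_disjoint) (use fX dj in auto)
  also have "card ((\<lambda>s. s + p) ` X) = card X" by (rule card_image) (auto simp: inj_on_def)
  finally show ?thesis by simp
qed



context
  fixes p :: int
  assumes pp: "prime p" and p4: "[p = 1] (mod 4)"
begin

lemma p2': "p > 2" by (rule p2[OF pp p4])
lemma p0: "p > 0" using p2' by simp

lemma kk: "p = 4 * (p div 4) + 1" "p div 4 \<ge> 1"
proof -
  show k: "p = 4 * (p div 4) + 1" using pmod4[OF pp p4] div_mult_mod_eq[of p 4] by linarith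
  show "p div 4 \<ge> 1" using k p2' by linarith
qed

lemma ar: "2 * ((p - 5) div 4) = (p - 5) div 2" "2 * ((p - 1) div 4) = (p - 1) div 2"
  "2 * ((p - 1) div 2) = p - 1" "(p - 5) div 2 \<ge> 0"
proof -
  show "2 * ((p - 5) div 4) = (p - 5) div 2" using kk by presburger
  show "2 * ((p - 1) div 4) = (p - 1) div 2" using kk by presburger
  show "2 * ((p - 1) div 2) = p - 1" using kk by presburger
  show "(p - 5) div 2 \<ge> 0" using kk by presburger
qed

lemma rmod:
  assumes "0 < d" "d < 2*p" "d \<noteq> p"
  shows "d mod p \<in> {1..p-1}"
  using mod_2p[OF p0, of d] assms by auto

lemma cntQ:
  "int (count (Delta (2*p) (lift p (Cls p 1))) d) =
    (if 0 < d \<and> d < 2*p \<and> d \<noteq> p then (if Legendre (d mod p) p = 1 then (p-5) div 2 else (p-1) div 2)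
     else if d = p then p - 1 else 0)"
proof -
  have c: "count (Delta (2*p) (lift p (Cls p 1))) d = (if 0 < d \<and> d < 2*p then 2 * Fc p (Cls p 1) (Cls p 1) (d mod p) else 0)"
    by (rule Delta_lift_count[OF p0 Cls_sub])
  show ?thesis
  proof (cases "0 < d \<and> d < 2*p \<and> d \<noteq> p")
    case True
    then have r: "d mod p \<in> {1..p-1}" using rmod by blast
    have "count (Delta (2*p) (lift p (Cls p 1))) d = 2 * Fc p (Cls p 1) (Cls p 1) (d mod p)" using c True by simp
    then have "int (count (Delta (2*p) (lift p (Cls p 1))) d) = 2 * int (Fc p (Cls p 1) (Cls p 1) (d mod p))" by simp
    then show ?thesis using True QQ_r(1)[OF pp p4 r] ar(1,2) by (simp split: if_splits)
  next
    case False
    show ?thesis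
    proof (cases "d = p")
      case True
      have "Fc p (Cls p 1) (Cls p 1) 0 = nat ((p - 1) div 2)"
        using zero_eq[OF pp p4, of 1 1] card_Q[OF pp p4] by simp
      then have "count (Delta (2*p) (lift p (Cls p 1))) d = 2 * nat ((p - 1) div 2)" using c True p0 by simp
      then have "int (count (Delta (2*p) (lift p (Cls p 1))) d) = 2 * ((p - 1) div 2)" using p2' by simp
      then show ?thesis using True ar(3) by simp
    next
      case False
      then have cf: "(0 < d \<and> d < 2*p) = False" using \<open>\<not> (0 < d \<and> d < 2*p \<and> d \<noteq> p)\<close> by blast
      have cf2: "(0 < d \<and> d < 2*p \<and> d \<noteq> p) = False" using \<open>\<not> (0 < d \<and> d < 2*p \<and> d \<noteq> p)\<close> by blast
      have dp: "(d = p) = False" using \<open>d \<noteq> p\<close> by blast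
      have l: "count (Delta (2*p) (lift p (Cls p 1))) d = 0" unfolding c cf if_False by (rule refl)
      show ?thesis unfolding l using cf dp by auto
    qed
  qed
qed

lemma cntN:
  "int (count (Delta (2*p) (lift p (Cls p (-1)))) d) =
    (if 0 < d \<and> d < 2*p \<and> d \<noteq> p then (if Legendre (d mod p) p = 1 then (p-1) div 2 else (p-5) div 2)
     else if d = p then p - 1 else 0)"
proof -
  have c: "count (Delta (2*p) (lift p (Cls p (-1)))) d = (if 0 < d \<and> d < 2*p then 2 * Fc p (Cls p (-1)) (Cls p (-1)) (d mod p) else 0)"
    by (rule Delta_lift_count[OF p0 Cls_sub])
  show ?thesis
  proof (cases "0 < d \<and> d < 2*p \<and> d \<noteq> p")
    case True
    then have r: "d mod p \<in> {1..p-1}" using rmod by blast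
    have "count (Delta (2*p) (lift p (Cls p (-1)))) d = 2 * Fc p (Cls p (-1)) (Cls p (-1)) (d mod p)" using c True by simp
    then have "int (count (Delta (2*p) (lift p (Cls p (-1)))) d) = 2 * int (Fc p (Cls p (-1)) (Cls p (-1)) (d mod p))" by simp
    then show ?thesis using True QQ_r(2)[OF pp p4 r] ar(1,2) by (simp split: if_splits)
  next
    case False
    show ?thesis
    proof (cases "d = p")
      case True
      have "Fc p (Cls p (-1)) (Cls p (-1)) 0 = nat ((p - 1) div 2)"
        using zero_eq[OF pp p4, of "-1" "-1"] card_N[OF pp p4] by simp
      then have "count (Delta (2*p) (lift p (Cls p (-1)))) d = 2 * nat ((p - 1) div 2)" using c True p0 by simp
      then have "int (count (Delta (2*p) (lift p (Cls p (-1)))) d) = 2 * ((p - 1) div 2)" using p2' by simp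
      then show ?thesis using True ar(3) by simp
    next
      case False
      then have cf: "(0 < d \<and> d < 2*p) = False" using \<open>\<not> (0 < d \<and> d < 2*p \<and> d \<noteq> p)\<close> by blast
      have cf2: "(0 < d \<and> d < 2*p \<and> d \<noteq> p) = False" using \<open>\<not> (0 < d \<and> d < 2*p \<and> d \<noteq> p)\<close> by blast
      have dp: "(d = p) = False" using \<open>d \<noteq> p\<close> by blast
      have l: "count (Delta (2*p) (lift p (Cls p (-1)))) d = 0" unfolding c cf if_False by (rule refl)
      show ?thesis unfolding l using cf dp by auto
    qed
  qed
qed

lemma cntE:
  "int (count (Delta2 (2*p) (lift p (Cls p 1)) (lift p (Cls p (-1)))) d
     + count (Delta2 (2*p) (lift p (Cls p (-1))) (lift p (Cls p 1))) d) =
    (if 0 < d \<and> d < 2*p \<and> d \<noteq> p then p - 1 else 0)"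
proof -
  have c1: "count (Delta2 (2*p) (lift p (Cls p 1)) (lift p (Cls p (-1)))) d = (if 0 \<le> d \<and> d < 2*p then 2 * Fc p (Cls p 1) (Cls p (-1)) (d mod p) else 0)"
    by (rule Delta2_lift_count[OF p0 Cls_sub Cls_sub])
  have c2: "count (Delta2 (2*p) (lift p (Cls p (-1))) (lift p (Cls p 1))) d = (if 0 \<le> d \<and> d < 2*p then 2 * Fc p (Cls p (-1)) (Cls p 1) (d mod p) else 0)"
    by (rule Delta2_lift_count[OF p0 Cls_sub Cls_sub])
  have z1: "Fc p (Cls p 1) (Cls p (-1)) 0 = 0" using zero_eq[OF pp p4, of 1 "-1"] Cls_disj[OF pp p4] by simp
  have z2: "Fc p (Cls p (-1)) (Cls p 1) 0 = 0" using zero_eq[OF pp p4, of "-1" 1] Cls_disj[OF pp p4] by (simp add: Int_commute)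
  show ?thesis
  proof (cases "0 < d \<and> d < 2*p \<and> d \<noteq> p")
    case True
    then have r: "d mod p \<in> {1..p-1}" using rmod by blast
    have a1: "count (Delta2 (2*p) (lift p (Cls p 1)) (lift p (Cls p (-1)))) d = 2 * Fc p (Cls p 1) (Cls p (-1)) (d mod p)"
      using c1 True by simp
    have a2: "count (Delta2 (2*p) (lift p (Cls p (-1))) (lift p (Cls p 1))) d = 2 * Fc p (Cls p (-1)) (Cls p 1) (d mod p)"
      using c2 True by simp
    have "int (count (Delta2 (2*p) (lift p (Cls p 1)) (lift p (Cls p (-1)))) d
     + count (Delta2 (2*p) (lift p (Cls p (-1))) (lift p (Cls p 1))) d) = 
      2 * (int (Fc p (Cls p 1) (Cls p (-1)) (d mod p)) + int (Fc p (Cls p (-1)) (Cls p 1) (d mod p)))"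
      unfolding a1 a2 by simp
    also have "\<dots> = p - 1" using QQ_r(3)[OF pp p4 r] ar(3) by simp
    finally show ?thesis using True by simp
  next
    case False
    then have "d < 0 \<or> d \<ge> 2*p \<or> d mod p = 0" using p0 by auto
    then show ?thesis using c1 c2 False z1 z2 by auto
  qed
qed

end



context
  fixes p :: int
  assumes pp: "prime p" and p4: "[p = 1] (mod 4)"
begin

lemma memQ: "d \<in> lift p (Cls p 1) \<longleftrightarrow> (0 < d \<and> d < 2*p \<and> d \<noteq> p \<and> Legendre (d mod p) p = 1)"
proof (cases "d = p")
  case True
  then show ?thesis using mem_lift[OF p0[OF pp p4] Cls_sub[of p 1], of d] by (simp add: Cls_def)
next
  case False
  then show ?thesis using mem_lift[OF p0[OF pp p4] Cls_sub[of p 1], of d] rmod[OF pp p4, of d] by (auto simp: Cls_def)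
qed

lemma memN: "d \<in> lift p (Cls p (-1)) \<longleftrightarrow> (0 < d \<and> d < 2*p \<and> d \<noteq> p \<and> Legendre (d mod p) p = -1)"
proof (cases "d = p")
  case True
  then show ?thesis using mem_lift[OF p0[OF pp p4] Cls_sub[of p "-1"], of d] by (simp add: Cls_def)
next
  case False
  then show ?thesis using mem_lift[OF p0[OF pp p4] Cls_sub[of p "-1"], of d] rmod[OF pp p4, of d] by (auto simp: Cls_def)
qed

lemma Lpm: "0 < d \<Longrightarrow> d < 2*p \<Longrightarrow> d \<noteq> p \<Longrightarrow> Legendre (d mod p) p = 1 \<or> Legendre (d mod p) p = -1"
  using leg_nz[OF pp rmod[OF pp p4]] by blast

lemma cntR:
  fixes a b c :: int and X Y :: "int set"
  assumes X: "X = lift p (Cls p a)" and Y: "Y = lift p (Cls p b)" and ab: "a = 1 \<and> b = -1 \<or> a = -1 \<and> b = 1"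
  shows "int (count (mcopies (nat ((p-5) div 2)) X + mcopies (nat ((p-1) div 2)) Y + mcopies (nat (p-1)) {p}) d) =
    (if 0 < d \<and> d < 2*p \<and> d \<noteq> p then (if Legendre (d mod p) p = a then (p-5) div 2 else (p-1) div 2)
     else if d = p then p - 1 else 0)"
proof -
  have fX: "finite X" unfolding X by (rule finite_lift[OF Cls_sub])
  have fY: "finite Y" unfolding Y by (rule finite_lift[OF Cls_sub])
  have c: "count (mcopies (nat ((p-5) div 2)) X + mcopies (nat ((p-1) div 2)) Y + mcopies (nat (p-1)) {p}) d
     = (if d \<in> X then nat ((p-5) div 2) else 0) + (if d \<in> Y then nat ((p-1) div 2) else 0) + (if d = p then nat (p-1) else 0)"
    using count_mcopies[OF fX] count_mcopies[OF fY] count_mcopies[of "{p}"] by simp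
  have n1: "int (nat ((p-5) div 2)) = (p-5) div 2" using ar(4)[OF pp p4] by simp
  have n2: "int (nat ((p-1) div 2)) = (p-1) div 2" using p2'[OF pp p4] by simp
  have n3: "int (nat (p-1)) = p - 1" using p2'[OF pp p4] by simp
  have mX: "d \<in> X \<longleftrightarrow> (0 < d \<and> d < 2*p \<and> d \<noteq> p \<and> Legendre (d mod p) p = a)"
    using ab memQ memN X by auto
  have mY: "d \<in> Y \<longleftrightarrow> (0 < d \<and> d < 2*p \<and> d \<noteq> p \<and> Legendre (d mod p) p = b)"
    using ab memQ memN Y by auto
  show ?thesis
  proof (cases "0 < d \<and> d < 2*p \<and> d \<noteq> p")
    case True
    then have L: "Legendre (d mod p) p = 1 \<or> Legendre (d mod p) p = -1" using Lpm by blast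
    show ?thesis
    proof (cases "Legendre (d mod p) p = a")
      case True
      then have "d \<in> X" "d \<notin> Y" using mX mY ab \<open>0 < d \<and> d < 2*p \<and> d \<noteq> p\<close> by auto
      then show ?thesis using c n1 True \<open>0 < d \<and> d < 2*p \<and> d \<noteq> p\<close> by simp
    next
      case False
      then have "d \<notin> X" "d \<in> Y" using mX mY ab L \<open>0 < d \<and> d < 2*p \<and> d \<noteq> p\<close> by auto
      then show ?thesis using c n2 False \<open>0 < d \<and> d < 2*p \<and> d \<noteq> p\<close> by simp
    qed
  next
    case False
    then have "d \<notin> X" "d \<notin> Y" using mX mY by blast+
    then show ?thesis using c n3 False by auto
  qed
qed

lemma A_eqs:
  assumes "A0 = {s. s \<in> {1..p-1} \<and> QuadRes p s} \<union> {s + p | s. s \<in> {1..p-1} \<and> QuadRes p s}"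
    and "A1 = {t. t \<in> {1..p-1} \<and> \<not> QuadRes p t} \<union> {t + p | t. t \<in> {1..p-1} \<and> \<not> QuadRes p t}"
  shows "A0 = lift p (Cls p 1)" "A1 = lift p (Cls p (-1))"
proof -
  have QR: "Legendre s p = (if QuadRes p s then 1 else -1)" if "s \<in> {1..p-1}" for s
  proof -
    have "\<not> p dvd s" using that by (auto dest: zdvd_imp_le)
    then show ?thesis by (simp add: Legendre_def cong_0_iff)
  qed
  have eQ: "{s. s \<in> {1..p-1} \<and> QuadRes p s} = Cls p 1" using QR by (auto simp: Cls_def split: if_splits)
  have eN: "{s. s \<in> {1..p-1} \<and> \<not> QuadRes p s} = Cls p (-1)" using QR by (auto simp: Cls_def split: if_splits)
  have im: "{s + p | s. s \<in> {1..p-1} \<and> P s} = (\<lambda>s. s + p) ` {s. s \<in> {1..p-1} \<and> P s}" for P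
    by auto
  show "A0 = lift p (Cls p 1)" unfolding assms(1) im eQ lift_def ..
  show "A1 = lift p (Cls p (-1))" unfolding assms(2) im eN lift_def ..
qed

end

theorem mainTheorem5:
  fixes p :: int and A0 A1 :: "int set"
  assumes "prime p" and "[p = 1] (mod 4)"
    and "A0 = {s. s \<in> {1..p-1} \<and> QuadRes p s} \<union> {s + p | s. s \<in> {1..p-1} \<and> QuadRes p s}"
    and "A1 = {t. t \<in> {1..p-1} \<and> \<not> QuadRes p t} \<union> {t + p | t. t \<in> {1..p-1} \<and> \<not> QuadRes p t}"
  shows "Delta (2*p) A0 = mcopies (nat ((p-5) div 2)) A0 + mcopies (nat ((p-1) div 2)) A1
                          + mcopies (nat (p-1)) {p} \<and>
         Delta (2*p) A1 = mcopies (nat ((p-5) div 2)) A1 + mcopies (nat ((p-1) div 2)) A0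
                          + mcopies (nat (p-1)) {p} \<and>
         is_DPDF (2*p) 2 (nat (p-1)) (nat (p-3)) (nat (2*p-2)) {A0, A1} \<and>
         is_EPDF (2*p) 2 (nat (p-1)) (nat (p-1)) 0 {A0, A1}"
proof -
  note pp = assms(1) and p4 = assms(2)
  have eA0: "A0 = lift p (Cls p 1)" and eA1: "A1 = lift p (Cls p (-1))"
    using A_eqs[OF pp p4 assms(3,4)] by auto
  have P0: "p > 0" using p0[OF pp p4] .
  have P2: "p > 2" using p2'[OF pp p4] .
  have D0: "Delta (2*p) A0 = mcopies (nat ((p-5) div 2)) A0 + mcopies (nat ((p-1) div 2)) A1 + mcopies (nat (p-1)) {p}"
  proof (rule multiset_eqI)
    fix d
    have "int (count (Delta (2*p) A0) d) = int (count (mcopies (nat ((p-5) div 2)) A0 + mcopies (nat ((p-1) div 2)) A1 + mcopies (nat (p-1)) {p}) d)"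
      unfolding cntR[OF pp p4 eA0 eA1 disjI1[OF conjI[OF refl refl]]] using cntQ[OF pp p4, of d] eA0 by simp
    then show "count (Delta (2*p) A0) d = count (mcopies (nat ((p-5) div 2)) A0 + mcopies (nat ((p-1) div 2)) A1 + mcopies (nat (p-1)) {p}) d"
      by simp
  qed
  have D1: "Delta (2*p) A1 = mcopies (nat ((p-5) div 2)) A1 + mcopies (nat ((p-1) div 2)) A0 + mcopies (nat (p-1)) {p}"
  proof (rule multiset_eqI)
    fix d
    have e: "(if Legendre (d mod p) p = 1 then (p-1) div 2 else (p-5) div 2) = (if Legendre (d mod p) p = -1 then (p-5) div 2 else (p-1) div 2)"
      if "0 < d \<and> d < 2*p \<and> d \<noteq> p"
      using Lpm[OF pp p4, of d] that by auto
    have "int (count (Delta (2*p) A1) d) = int (count (mcopies (nat ((p-5) div 2)) A1 + mcopies (nat ((p-1) div 2)) A0 + mcopies (nat (p-1)) {p}) d)"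
      unfolding cntR[OF pp p4 eA1 eA0 disjI2[OF conjI[OF refl refl]]] using cntN[OF pp p4, of d] eA1 e by auto
    then show "count (Delta (2*p) A1) d = count (mcopies (nat ((p-5) div 2)) A1 + mcopies (nat ((p-1) div 2)) A0 + mcopies (nat (p-1)) {p}) d"
      by simp
  qed
  have one0: "1 \<in> A0" unfolding eA0 memQ[OF pp p4] using P2 leg_one[of p] by simp
  have one1: "1 \<notin> A1" unfolding eA1 memN[OF pp p4] using P2 leg_one[of p] by simp
  have neq: "A0 \<noteq> A1" using one0 one1 by blast
  have fam: "pdf_family (2*p) 2 (nat (p-1)) {A0, A1}"
  proof -
    have sub: "lift p (Cls p e) \<subseteq> zgrp (2*p) - {0}" for e
    proof
      fix x assume "x \<in> lift p (Cls p e)"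
      then have "0 < x \<and> x < 2*p" using mem_lift[OF P0 Cls_sub[of p e]] by blast
      then show "x \<in> zgrp (2*p) - {0}" by (simp add: zgrp_def)
    qed
    have s0: "A0 \<subseteq> zgrp (2*p) - {0}" using sub[of 1] eA0 by simp
    have s1: "A1 \<subseteq> zgrp (2*p) - {0}" using sub[of "-1"] eA1 by simp
    have cQ: "card A0 = nat (p-1)"
      unfolding eA0 card_lift[OF P0 Cls_sub[of p 1]] card_Q[OF pp p4] using ar(3)[OF pp p4] P2 by simp
    have cN: "card A1 = nat (p-1)"
      unfolding eA1 card_lift[OF P0 Cls_sub[of p "-1"]] card_N[OF pp p4] using ar(3)[OF pp p4] P2 by simp
    have dj: "A0 \<inter> A1 = {}"
    proof (rule ccontr)
      assume "A0 \<inter> A1 \<noteq> {}"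
      then obtain x where "x \<in> A0" "x \<in> A1" by blast
      then show False unfolding eA0 eA1 memQ[OF pp p4] memN[OF pp p4] by simp
    qed
    have c2: "card {A0, A1} = 2" using neq by simp
    have b1: "\<forall>A\<in>{A0, A1}. A \<subseteq> zgrp (2*p) - {0} \<and> card A = nat (p-1)"
      using s0 s1 cQ cN by blast
    have b2: "\<forall>A\<in>{A0, A1}. \<forall>B\<in>{A0, A1}. A \<noteq> B \<longrightarrow> A \<inter> B = {}"
      using dj by blast
    show ?thesis unfolding pdf_family_def using c2 b1 b2 by blast
  qed
  have IntD_eq: "IntD (2*p) {A0, A1} = Delta (2*p) A0 + Delta (2*p) A1"
    unfolding IntD_def using neq by simp
  have pairs: "{(A, B). A \<in> {A0, A1} \<and> B \<in> {A0, A1} \<and> A \<noteq> B} = {(A0, A1), (A1, A0)}"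
    using neq by auto
  have ExtD_eq: "ExtD (2*p) {A0, A1} = Delta2 (2*p) A0 A1 + Delta2 (2*p) A1 A0"
    unfolding ExtD_def pairs using neq by simp
  have U: "\<Union>{A0, A1} = A0 \<union> A1" by simp
  have inU: "0 < x \<and> x < 2*p \<and> x \<noteq> p" if "x \<in> A0 \<union> A1" for x
  proof -
    have "x \<in> lift p (Cls p 1) \<or> x \<in> lift p (Cls p (-1))" using that eA0 eA1 by simp
    then show ?thesis unfolding memQ[OF pp p4] memN[OF pp p4] by blast
  qed
  have outU: "x = p" if "x \<in> zgrp (2*p) - (\<Union>{A0, A1} \<union> {0})" for x
  proof (rule ccontr)
    assume "x \<noteq> p"
    moreover have "0 < x" "x < 2*p" "x \<notin> A0" "x \<notin> A1" using that by (auto simp: zgrp_def)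
    ultimately show False using Lpm[OF pp p4, of x] unfolding eA0 eA1 memQ[OF pp p4] memN[OF pp p4] by auto
  qed
  have ar1: "(p-5) div 2 + (p-1) div 2 = p - 3" using kk[OF pp p4] by presburger
  have DP: "is_DPDF (2*p) 2 (nat (p-1)) (nat (p-3)) (nat (2*p-2)) {A0, A1}"
    unfolding is_DPDF_def
  proof (intro conjI fam ballI)
    fix x assume "x \<in> \<Union>{A0, A1}"
    then have x: "0 < x \<and> x < 2*p \<and> x \<noteq> p" using inU U by blast
    have "int (count (IntD (2*p) {A0, A1}) x) = int (count (Delta (2*p) A0) x) + int (count (Delta (2*p) A1) x)"
      unfolding IntD_eq by simp
    also have "\<dots> = p - 3"
      unfolding eA0 eA1 cntQ[OF pp p4] cntN[OF pp p4] using x Lpm[OF pp p4, of x] ar1 by auto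
    finally show "count (IntD (2*p) {A0, A1}) x = nat (p-3)" by simp
  next
    fix x assume "x \<in> zgrp (2*p) - (\<Union>{A0, A1} \<union> {0})"
    then have x: "x = p" by (rule outU)
    have "int (count (IntD (2*p) {A0, A1}) x) = int (count (Delta (2*p) A0) x) + int (count (Delta (2*p) A1) x)"
      unfolding IntD_eq by simp
    also have "\<dots> = 2*p - 2"
      unfolding eA0 eA1 cntQ[OF pp p4] cntN[OF pp p4] using x P2 by simp
    finally show "count (IntD (2*p) {A0, A1}) x = nat (2*p-2)" by simp
  qed
  have EP: "is_EPDF (2*p) 2 (nat (p-1)) (nat (p-1)) 0 {A0, A1}"
    unfolding is_EPDF_def
  proof (intro conjI fam ballI)
    fix x assume "x \<in> \<Union>{A0, A1}"
    then have x: "0 < x \<and> x < 2*p \<and> x \<noteq> p" using inU U by blast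
    have "int (count (ExtD (2*p) {A0, A1}) x) = p - 1"
      unfolding ExtD_eq unfolding eA0 eA1 using cntE[OF pp p4, of x] x by simp
    then show "count (ExtD (2*p) {A0, A1}) x = nat (p-1)" by simp
  next
    fix x assume "x \<in> zgrp (2*p) - (\<Union>{A0, A1} \<union> {0})"
    then have x: "x = p" by (rule outU)
    have "int (count (ExtD (2*p) {A0, A1}) x) = 0"
      unfolding ExtD_eq unfolding eA0 eA1 using cntE[OF pp p4, of x] x by simp
    then show "count (ExtD (2*p) {A0, A1}) x = 0" by simp
  qed
  show ?thesis using D0 D1 DP EP by blast
qed

end
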